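(* Let $(G,\sigma)$ be a connection graph and $i\neq j\in V$. Writing $\mathcal{C}^\sigma(i,j)=\begin{bmatrix}\mathcal{C}^\sigma_{ii}&\mathcal{C}^\sigma_{ij}\\ \mathcal{C}^\sigma_{ji}&\mathcal{C}^\sigma_{jj}\end{bmatrix}$, the block $\mathcal{C}^\sigma_{ii}$ is invertible and $$\Omega^0_{ij}=-(\mathcal{C}^\sigma_{ii})^{-1}\mathcal{C}^\sigma_{ij}.$$
   Context: A connection graph $(G,\sigma)$: finite connected weighted graph $G=(V,E,W)$, $V=\{1,\dots,n\}$, $w_{xy}>0$ iff $\{x,y\}\in E$, $\deg(x)=\sum_y w_{xy}$, and $\sigma$ mapping oriented edges to $\mathsf{O}(d)$ with $\sigma_{yx}=\sigma_{xy}^{\mathrm T}$. Connection Laplacian $\mathcal{L}$: $nd\times nd$ block matrix with blocks $\deg(x)I_d$ on the diagonal, $-w_{xy}\sigma_{xy}$ for $x\sim y$, $0$ otherwise. For $M=\begin{bmatrix}A&B\\C&D\end{bmatrix}$, $M/D=A-BD^\dagger C$. The conductance matrix $\mathcal{C}^\sigma(i,j)=\mathcal{L}/\mathcal{L}_{\{i,j\}^c,\{i,j\}^c}\in\mathbb{R}^{2d\times 2d}$, blocks ordered $i$ then $j$. $(X_t)$: simple random walk with transition probabilities $w_{xy}/\deg(x)$; $T^0_j=\inf\{t\ge0:X_t=j\}$; $\Omega^0_{ij}=\mathbb{E}\big[\prod_{\ell=1}^{T^0_j}\sigma_{X_{\ell-1}X_\ell}\mid X_0=i\big]$ (ordered product).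 *)

theory Defs
  imports "HOL-Analysis.Analysis"
begin

text \<open>Matrices over an arbitrary finite index set S are represented as functions
  'i \<Rightarrow> 'i \<Rightarrow> real; only their values on S \<times> S matter.\<close>

definition mmul_on :: "'i set \<Rightarrow> ('i \<Rightarrow> 'i \<Rightarrow> real) \<Rightarrow> ('i \<Rightarrow> 'i \<Rightarrow> real) \<Rightarrow> ('i \<Rightarrow> 'i \<Rightarrow> real)" where
  "mmul_on S A B = (\<lambda>a b. \<Sum>c\<in>S. A a c * B c b)"

text \<open>Moore--Penrose pseudoinverse of the square matrix M restricted to S \<times> S
  (the unique matrix supported on S \<times> S satisfying the four Penrose equations on S).\<close>
definition pinv_on :: "'i set \<Rightarrow> ('i \<Rightarrow> 'i \<Rightarrow> real) \<Rightarrow> ('i \<Rightarrow> 'i \<Rightarrow> real)" where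
  "pinv_on S M = (THE X. (\<forall>a b. (a \<notin> S \<or> b \<notin> S) \<longrightarrow> X a b = 0) \<and>
      (\<forall>a\<in>S. \<forall>b\<in>S.
         mmul_on S (mmul_on S M X) M a b = M a b \<and>
         mmul_on S (mmul_on S X M) X a b = X a b \<and>
         mmul_on S M X a b = mmul_on S M X b a \<and>
         mmul_on S X M a b = mmul_on S X M b a))"

text \<open>Schur complement M/D, where D = M restricted to S \<times> S and A is M restricted
  to the complement of S; entries are meaningful for a, b outside S.\<close>
definition schur_on :: "'i set \<Rightarrow> ('i \<Rightarrow> 'i \<Rightarrow> real) \<Rightarrow> ('i \<Rightarrow> 'i \<Rightarrow> real)" where
  "schur_on S M = (\<lambda>a b. M a b - (\<Sum>c\<in>S. \<Sum>e\<in>S. M a c * pinv_on S M c e * M e b))"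

text \<open>Connection graphs: vertices of a finite type 'v, dimension d = CARD('d).\<close>

definition deg :: "('v::finite \<Rightarrow> 'v \<Rightarrow> real) \<Rightarrow> 'v \<Rightarrow> real" where
  "deg w x = (\<Sum>y\<in>UNIV. w x y)"

definition connection_graph ::
  "('v::finite \<Rightarrow> 'v \<Rightarrow> real) \<Rightarrow> ('v \<Rightarrow> 'v \<Rightarrow> real^'d::finite^'d) \<Rightarrow> bool" where
  "connection_graph w \<sigma> \<longleftrightarrow>
     (\<forall>x y. w x y \<ge> 0) \<and> (\<forall>x y. w x y = w y x) \<and> (\<forall>x. w x x = 0) \<and>
     (\<forall>x y. (\<lambda>u v. w u v > 0)\<^sup>*\<^sup>* x y) \<and>
     (\<forall>x y. w x y > 0 \<longrightarrow> orthogonal_matrix (\<sigma> x y) \<and> \<sigma> y x = transpose (\<sigma> x y))"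

text \<open>Connection Laplacian, indexed by pairs (vertex, coordinate).  For non-adjacent
  distinct x, y the entry is -w x y * ... = 0.\<close>
definition conn_laplacian ::
  "('v::finite \<Rightarrow> 'v \<Rightarrow> real) \<Rightarrow> ('v \<Rightarrow> 'v \<Rightarrow> real^'d::finite^'d) \<Rightarrow> ('v \<times> 'd) \<Rightarrow> ('v \<times> 'd) \<Rightarrow> real" where
  "conn_laplacian w \<sigma> = (\<lambda>(x, a) (y, b).
     if x = y then (if a = b then deg w x else 0) else - w x y * (\<sigma> x y $ a $ b))"

text \<open>Conductance matrix C^\<sigma>(i,j) = L / L_{{i,j}^c,{i,j}^c}, indexed by {i,j} \<times> 'd.\<close>
definition conductance ::
  "('v::finite \<Rightarrow> 'v \<Rightarrow> real) \<Rightarrow> ('v \<Rightarrow> 'v \<Rightarrow> real^'d::finite^'d) \<Rightarrow> 'v \<Rightarrow> 'v \<Rightarrow> ('v \<times> 'd) \<Rightarrow> ('v \<times> 'd) \<Rightarrow> real" where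
  "conductance w \<sigma> i j = schur_on {p. fst p \<notin> {i, j}} (conn_laplacian w \<sigma>)"

text \<open>The (x,y) block of the conductance matrix (x, y \<in> {i,j}).\<close>
definition cond_block ::
  "('v::finite \<Rightarrow> 'v \<Rightarrow> real) \<Rightarrow> ('v \<Rightarrow> 'v \<Rightarrow> real^'d::finite^'d) \<Rightarrow> 'v \<Rightarrow> 'v \<Rightarrow> 'v \<Rightarrow> 'v \<Rightarrow> real^'d^'d" where
  "cond_block w \<sigma> i j x y = (\<chi> a b. conductance w \<sigma> i j (x, a) (y, b))"

text \<open>Simple random walk: a trajectory X_0 = i, X_1 = p!0, ..., X_k = p!(k-1).\<close>
definition walk_prob :: "('v::finite \<Rightarrow> 'v \<Rightarrow> real) \<Rightarrow> 'v \<Rightarrow> 'v list \<Rightarrow> real" where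
  "walk_prob w i p = (let vs = i # p in
     \<Prod>t<length p. w (vs ! t) (vs ! Suc t) / deg w (vs ! t))"

text \<open>Ordered product \<sigma>_{X_0 X_1} \<sigma>_{X_1 X_2} ... \<sigma>_{X_{k-1} X_k}.\<close>
definition walk_holonomy :: "('v \<Rightarrow> 'v \<Rightarrow> real^'d::finite^'d) \<Rightarrow> 'v \<Rightarrow> 'v list \<Rightarrow> real^'d^'d" where
  "walk_holonomy \<sigma> i p = (let vs = i # p in
     foldl (**) (mat 1) (map (\<lambda>t. \<sigma> (vs ! t) (vs ! Suc t)) [0..<length p]))"

text \<open>Trajectories of length k started at i whose hitting time T^0_j of j equals k.\<close>
definition hit_paths :: "'v::finite \<Rightarrow> 'v \<Rightarrow> nat \<Rightarrow> 'v list set" where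
  "hit_paths i j k = {p. length p = k \<and> (i # p) ! k = j \<and> (\<forall>t<k. (i # p) ! t \<noteq> j)}"

text \<open>\<Omega>^0_{ij} = E[ prod_{l=1}^{T^0_j} \<sigma>_{X_{l-1} X_l} | X_0 = i ], written as the sum over
  all finite trajectories stopped at the hitting time of j.\<close>
definition Omega0 :: "('v::finite \<Rightarrow> 'v \<Rightarrow> real) \<Rightarrow> ('v \<Rightarrow> 'v \<Rightarrow> real^'d::finite^'d) \<Rightarrow> 'v \<Rightarrow> 'v \<Rightarrow> real^'d^'d" where
  "Omega0 w \<sigma> i j = (\<Sum>k. \<Sum>p\<in>hit_paths i j k. walk_prob w i p *\<^sub>R walk_holonomy \<sigma> i p)"

end

theory Submission
  imports Defs
begin


lemma walk_prob_Nil[simp]: "walk_prob w x [] = 1"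
  by (simp add: walk_prob_def)

lemma walk_prob_Cons: "walk_prob w x (y # p) = w x y / deg w x * walk_prob w y p"
  unfolding walk_prob_def Let_def
  by (simp add: prod.lessThan_Suc_shift del: prod.lessThan_Suc)

lemma walk_hol_Nil[simp]: "walk_holonomy \<sigma> x [] = mat 1"
  by (simp add: walk_holonomy_def)

lemma foldl_mmul: fixes a :: "'a::semiring_1^'n^'n" shows "foldl (**) a l = a ** foldl (**) (mat 1) l"
proof (induction l arbitrary: a)
  case Nil then show ?case by simp
next
  case (Cons b l)
  have "foldl (**) a (b#l) = foldl (**) (a**b) l" by simp
  also have "\<dots> = (a**b) ** foldl (**) (mat 1) l" by (rule Cons.IH)
  also have "\<dots> = a ** (b ** foldl (**) (mat 1) l)" by (simp add: matrix_mul_assoc)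
  also have "b ** foldl (**) (mat 1) l = foldl (**) (mat 1) (b#l)" using Cons.IH[of b] by simp
  finally show ?case .
qed

lemma walk_hol_Cons: "walk_holonomy \<sigma> x (y # p) = \<sigma> x y ** walk_holonomy \<sigma> y p"
proof -
  have u: "[0..<Suc (length p)] = 0 # map Suc [0..<length p]"
    by (subst upt_conv_Cons) (simp_all add: map_Suc_upt)
  show ?thesis
    unfolding walk_holonomy_def Let_def
    apply (simp only: length_Cons u list.map map_map)
    apply (subst foldl_Cons)
    apply (subst foldl_mmul)
    apply (simp add: comp_def)
    done
qed

lemma finite_hit_paths: "finite (hit_paths (x::'v::finite) j k)"
proof -
  have "hit_paths x j k \<subseteq> {p. set p \<subseteq> UNIV \<and> length p = k}"
    by (auto simp: hit_paths_def)
  then show ?thesis using finite_lists_length_eq[of "UNIV::'v set" k] finite_subset by auto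
qed

lemma hit_paths_j: "hit_paths j j k = (if k = 0 then {[]} else {})"
  by (auto simp: hit_paths_def)

lemma hit_paths_0: "x \<noteq> j \<Longrightarrow> hit_paths x j 0 = {}"
  by (auto simp: hit_paths_def)

lemma hit_paths_Suc: "x \<noteq> j \<Longrightarrow>
   hit_paths x j (Suc k) = (\<lambda>(y,p). y # p) ` (SIGMA y:UNIV. hit_paths y j k)"
proof (intro set_eqI iffI)
  fix q assume x: "x \<noteq> j" and q: "q \<in> hit_paths x j (Suc k)"
  then obtain y p where qq: "q = y # p" by (cases q) (auto simp: hit_paths_def)
  have "p \<in> hit_paths y j k"
    using q unfolding qq hit_paths_def
    by auto
  then show "q \<in> (\<lambda>(y,p). y # p) ` (SIGMA y:UNIV. hit_paths y j k)"
    using qq by auto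
next
  fix q assume x: "x \<noteq> j" and q: "q \<in> (\<lambda>(y,p). y # p) ` (SIGMA y:UNIV. hit_paths y j k)"
  then obtain y p where qq: "q = y # p" and p: "p \<in> hit_paths y j k" by auto
  show "q \<in> hit_paths x j (Suc k)"
    using p x unfolding qq hit_paths_def
    by (auto simp: less_Suc_eq_0_disj)
qed

lemma sum_hit_paths_Suc: "x \<noteq> j \<Longrightarrow>
   (\<Sum>q\<in>hit_paths (x::'v::finite) j (Suc k). g q) = (\<Sum>y\<in>UNIV. \<Sum>p\<in>hit_paths y j k. g (y # p))"
  apply (simp add: hit_paths_Suc)
  apply (subst sum.reindex)
   apply (force simp: inj_on_def)
  apply (simp add: sum.Sigma finite_hit_paths comp_def split_def)
  done



locale cg =
  fixes w :: "'v::finite \<Rightarrow> 'v \<Rightarrow> real" and \<sigma> :: "'v \<Rightarrow> 'v \<Rightarrow> real^'d::finite^'d"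
    and i j :: 'v
  assumes CG: "connection_graph w \<sigma>" and ij: "i \<noteq> j"
begin

lemma w_nonneg: "w x y \<ge> 0" using CG unfolding connection_graph_def by blast
lemma w_sym: "w x y = w y x" using CG unfolding connection_graph_def by blast
lemma w_diag: "w x x = 0" using CG unfolding connection_graph_def by blast
lemma conn: "(\<lambda>u v. w u v > 0)\<^sup>*\<^sup>* x y" using CG unfolding connection_graph_def by blast
lemma orth: "w x y > 0 \<Longrightarrow> orthogonal_matrix (\<sigma> x y)" using CG unfolding connection_graph_def by blast

lemma deg_pos: "deg w x > 0"
proof -
  obtain z where z: "z \<noteq> x" using ij by metis
  from conn[of x z] z obtain y where y: "w x y > 0"
    by (metis converse_rtranclpE)
  have "w x y \<le> deg w x" unfolding deg_def
    by (rule member_le_sum) (auto simp: w_nonneg)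
  with y show ?thesis by simp
qed

lemma sumP: "(\<Sum>y\<in>UNIV. w x y / deg w x) = 1"
  using deg_pos[of x] by (simp add: sum_divide_distrib[symmetric] deg_def)

lemma wp_nonneg: "walk_prob w x p \<ge> 0"
proof (induction p arbitrary: x)
  case Nil then show ?case by simp
next
  case (Cons y p) then show ?case
    using deg_pos[of x] w_nonneg[of x y] by (simp add: walk_prob_Cons)
qed

lemma wp_pos_orth: "walk_prob w x p > 0 \<Longrightarrow> orthogonal_matrix (walk_holonomy \<sigma> x p)"
proof (induction p arbitrary: x)
  case Nil then show ?case by (simp add: orthogonal_matrix_id)
next
  case (Cons y p)
  have d: "deg w x > 0" by (rule deg_pos)
  define c where "c = w x y / deg w x"
  have h: "0 < c * walk_prob w y p" using Cons.prems unfolding walk_prob_Cons c_def .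
  have "c \<ge> 0" using d w_nonneg[of x y] by (simp add: c_def)
  moreover have "c \<noteq> 0" "walk_prob w y p \<noteq> 0" using h by auto
  ultimately have "c > 0" "walk_prob w y p > 0"
    using wp_nonneg[of y p] by (simp_all add: less_le)
  then have "w x y / deg w x > 0" "walk_prob w y p > 0" by (simp_all add: c_def)
  then have "w x y > 0" using d by (simp add: zero_less_divide_iff)
  then show ?case using Cons.IH[of y] \<open>walk_prob w y p > 0\<close> orth[of x y]
    by (simp add: walk_hol_Cons orthogonal_matrix_mul)
qed

lemma orth_entry: fixes Q :: "real^'n^'n" assumes "orthogonal_matrix Q" shows "\<bar>Q$a$b\<bar> \<le> 1"
proof -
  have "(transpose Q ** Q) $ b $ b = 1" using assms by (simp add: orthogonal_matrix mat_def)
  then have s: "(\<Sum>c\<in>UNIV. Q$c$b * Q$c$b) = 1"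
    by (simp add: matrix_matrix_mult_def transpose_def)
  have "Q$a$b * Q$a$b \<le> (\<Sum>c\<in>UNIV. Q$c$b * Q$c$b)"
    by (rule member_le_sum) auto
  then have "(Q$a$b)^2 \<le> 1" using s by (simp add: power2_eq_square)
  then show ?thesis by (simp add: abs_square_le_1)
qed

definition q :: "'v \<Rightarrow> nat \<Rightarrow> real" where
  "q x k = (\<Sum>p\<in>hit_paths x j k. walk_prob w x p)"

definition A :: "'v \<Rightarrow> nat \<Rightarrow> real^'d^'d" where
  "A x k = (\<Sum>p\<in>hit_paths x j k. walk_prob w x p *\<^sub>R walk_holonomy \<sigma> x p)"

lemma q_nonneg: "q x k \<ge> 0"
  unfolding q_def by (rule sum_nonneg) (rule wp_nonneg)

lemma q_j: "q j k = (if k = 0 then 1 else 0)"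
  by (simp add: q_def hit_paths_j)

lemma q_0: "x \<noteq> j \<Longrightarrow> q x 0 = 0"
  by (simp add: q_def hit_paths_0)

lemma q_Suc: "x \<noteq> j \<Longrightarrow> q x (Suc k) = (\<Sum>y\<in>UNIV. w x y / deg w x * q y k)"
  by (simp add: q_def sum_hit_paths_Suc walk_prob_Cons sum_distrib_left)

lemma q_partial: "(\<Sum>k<n. q x k) \<le> 1"
proof (induction n arbitrary: x)
  case 0 then show ?case by simp
next
  case (Suc n)
  show ?case
  proof (cases "x = j")
    case True
    then show ?thesis by (simp add: q_j sum.lessThan_Suc_shift del: sum.lessThan_Suc)
  next
    case False
    have "(\<Sum>k<Suc n. q x k) = (\<Sum>k<n. q x (Suc k))"
      using False by (simp add: sum.lessThan_Suc_shift q_0 del: sum.lessThan_Suc)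
    also have "\<dots> = (\<Sum>y\<in>UNIV. w x y / deg w x * (\<Sum>k<n. q y k))"
      using False by (simp add: q_Suc sum_distrib_left) (rule sum.swap)
    also have "\<dots> \<le> (\<Sum>y\<in>UNIV. w x y / deg w x * 1)"
      apply (rule sum_mono)
      apply (rule mult_left_mono)
      using Suc.IH deg_pos[of x] w_nonneg[of x] by auto
    also have "\<dots> = 1" using sumP by simp
    finally show ?thesis .
  qed
qed

lemma q_summable: "summable (q x)"
  apply (rule bounded_imp_summable[where B = 1])
   apply (rule q_nonneg)
  subgoal for n using q_partial[of x "Suc n"] by (simp add: lessThan_Suc_atMost)
  done

lemma A_comp: "A x k $ a $ b = (\<Sum>p\<in>hit_paths x j k. walk_prob w x p * walk_holonomy \<sigma> x p $ a $ b)"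
  by (simp add: A_def)

lemma A_comp_bound: "\<bar>A x k $ a $ b\<bar> \<le> q x k"
proof -
  have "\<bar>A x k $ a $ b\<bar> \<le> (\<Sum>p\<in>hit_paths x j k. \<bar>walk_prob w x p * walk_holonomy \<sigma> x p $ a $ b\<bar>)"
    unfolding A_comp by (rule sum_abs)
  also have "\<dots> \<le> (\<Sum>p\<in>hit_paths x j k. walk_prob w x p)"
  proof (rule sum_mono)
    fix p
    show "\<bar>walk_prob w x p * walk_holonomy \<sigma> x p $ a $ b\<bar> \<le> walk_prob w x p"
    proof (cases "walk_prob w x p > 0")
      case True
      then have "\<bar>walk_holonomy \<sigma> x p $ a $ b\<bar> \<le> 1" by (intro orth_entry wp_pos_orth)
      then show ?thesis using True by (simp add: abs_mult mult_left_le)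
    next
      case False
      then have "walk_prob w x p = 0" using wp_nonneg[of x p] by simp
      then show ?thesis by simp
    qed
  qed
  finally show ?thesis by (simp add: q_def)
qed

lemma A_comp_summable: "summable (\<lambda>k. A x k $ a $ b)"
  by (rule summable_comparison_test'[OF q_summable[of x], of 0]) (simp add: A_comp_bound)

lemma A_abs_summable: "summable (\<lambda>k. \<bar>A x k $ a $ b\<bar>)"
  by (rule summable_comparison_test'[OF q_summable[of x], of 0]) (simp add: A_comp_bound)

lemma A_summable: "summable (A x)"
proof (rule summable_comparison_test'[of "\<lambda>k. \<Sum>a\<in>UNIV. \<Sum>b\<in>UNIV. \<bar>A x k $ a $ b\<bar>" 0])
  show "summable (\<lambda>k. \<Sum>a\<in>UNIV. \<Sum>b\<in>UNIV. \<bar>A x k $ a $ b\<bar>)"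
    by (intro summable_sum A_abs_summable)
  fix k
  have "norm (A x k) \<le> (\<Sum>a\<in>UNIV. norm (A x k $ a))" 
    by (simp add: norm_vec_def L2_set_le_sum)
  also have "\<dots> \<le> (\<Sum>a\<in>UNIV. \<Sum>b\<in>UNIV. \<bar>A x k $ a $ b\<bar>)"
    by (rule sum_mono) (simp add: norm_le_l1_cart)
  finally show "norm (A x k) \<le> (\<Sum>a\<in>UNIV. \<Sum>b\<in>UNIV. \<bar>A x k $ a $ b\<bar>)" .
qed

definition Om :: "'v \<Rightarrow> 'd \<Rightarrow> 'd \<Rightarrow> real" where
  "Om x a b = Omega0 w \<sigma> x j $ a $ b"

lemma Om_suminf: "Om x a b = (\<Sum>k. A x k $ a $ b)"
proof -
  have e: "Omega0 w \<sigma> x j = (\<Sum>k. A x k)" by (simp add: Omega0_def A_def)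
  have bl: "bounded_linear (\<lambda>M::real^'d^'d. M $ a $ b)"
    using bounded_linear_compose[OF bounded_linear_vec_nth bounded_linear_vec_nth] .
  show ?thesis unfolding Om_def e
    using bounded_linear.suminf[OF bl A_summable] by simp
qed

lemma Om_j: "Om j a b = (if a = b then 1 else 0)"
proof -
  have "(\<lambda>k. A j k $ a $ b) = (\<lambda>k. if k = 0 then (if a = b then 1 else 0) else 0)"
    by (auto simp: A_def hit_paths_j mat_def)
  then show ?thesis unfolding Om_suminf
    using sums_unique[OF sums_single[of 0 "\<lambda>_. if a = b then 1 else (0::real)"]] by simp
qed

lemma A_Suc: "x \<noteq> j \<Longrightarrow> A x (Suc k) $ a $ b =
   (\<Sum>y\<in>UNIV. w x y / deg w x * (\<Sum>c\<in>UNIV. \<sigma> x y $ a $ c * A y k $ c $ b))"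
proof -
  assume x: "x \<noteq> j"
  have "A x (Suc k) $ a $ b = (\<Sum>y\<in>UNIV. \<Sum>p\<in>hit_paths y j k.
      (w x y / deg w x * walk_prob w y p) * (\<Sum>c\<in>UNIV. \<sigma> x y $ a $ c * walk_holonomy \<sigma> y p $ c $ b))"
    using x by (simp add: A_comp sum_hit_paths_Suc walk_prob_Cons walk_hol_Cons matrix_matrix_mult_def)
  also have "\<dots> = (\<Sum>y\<in>UNIV. w x y / deg w x * (\<Sum>c\<in>UNIV. \<sigma> x y $ a $ c * A y k $ c $ b))"
  proof (rule sum.cong[OF refl])
    fix y
    show "(\<Sum>p\<in>hit_paths y j k.
      (w x y / deg w x * walk_prob w y p) * (\<Sum>c\<in>UNIV. \<sigma> x y $ a $ c * walk_holonomy \<sigma> y p $ c $ b))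
      = w x y / deg w x * (\<Sum>c\<in>UNIV. \<sigma> x y $ a $ c * A y k $ c $ b)"
      unfolding A_comp sum_distrib_left
      by (subst sum.swap) (simp add: sum_distrib_left mult_ac)
  qed
  finally show ?thesis .
qed

lemma A_0: "x \<noteq> j \<Longrightarrow> A x 0 = 0"
  by (simp add: A_def hit_paths_0)

lemma Om_harm: "x \<noteq> j \<Longrightarrow>
   Om x a b = (\<Sum>y\<in>UNIV. w x y / deg w x * (\<Sum>c\<in>UNIV. \<sigma> x y $ a $ c * Om y c b))"
proof -
  assume x: "x \<noteq> j"
  have "Om x a b = (\<Sum>k. A x (Suc k) $ a $ b)"
    unfolding Om_suminf using suminf_split_head[OF A_comp_summable[of x a b]] x by (simp add: A_0)
  also have "\<dots> = (\<Sum>k. \<Sum>y\<in>UNIV. w x y / deg w x * (\<Sum>c\<in>UNIV. \<sigma> x y $ a $ c * A y k $ c $ b))"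
    using x by (simp add: A_Suc)
  also have "\<dots> = (\<Sum>y\<in>UNIV. \<Sum>k. w x y / deg w x * (\<Sum>c\<in>UNIV. \<sigma> x y $ a $ c * A y k $ c $ b))"
    by (rule suminf_sum) (intro summable_mult summable_sum A_comp_summable)
  also have "\<dots> = (\<Sum>y\<in>UNIV. w x y / deg w x * (\<Sum>c\<in>UNIV. \<sigma> x y $ a $ c * Om y c b))"
  proof (rule sum.cong[OF refl])
    fix y
    have "(\<Sum>k. w x y / deg w x * (\<Sum>c\<in>UNIV. \<sigma> x y $ a $ c * A y k $ c $ b))
       = w x y / deg w x * (\<Sum>k. \<Sum>c\<in>UNIV. \<sigma> x y $ a $ c * A y k $ c $ b)"
      by (rule suminf_mult) (intro summable_sum summable_mult A_comp_summable)
    also have "(\<Sum>k. \<Sum>c\<in>UNIV. \<sigma> x y $ a $ c * A y k $ c $ b) = (\<Sum>c\<in>UNIV. \<Sum>k. \<sigma> x y $ a $ c * A y k $ c $ b)"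
      by (rule suminf_sum) (intro summable_mult A_comp_summable)
    also have "\<dots> = (\<Sum>c\<in>UNIV. \<sigma> x y $ a $ c * Om y c b)"
      by (rule sum.cong[OF refl]) (simp add: Om_suminf suminf_mult A_comp_summable)
    finally show "(\<Sum>k. w x y / deg w x * (\<Sum>c\<in>UNIV. \<sigma> x y $ a $ c * A y k $ c $ b))
       = w x y / deg w x * (\<Sum>c\<in>UNIV. \<sigma> x y $ a $ c * Om y c b)" .
  qed
  finally show ?thesis .
qed

end


lemma orth_norm: fixes Q :: "real^'n^'n" assumes "orthogonal_matrix Q" shows "norm (Q *v v) = norm v"
proof -
  have "orthogonal_transformation (\<lambda>x. Q *v x)"
    using assms by (simp add: orthogonal_transformation_matrix)
  then show ?thesis by (simp add: orthogonal_transformation)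
qed

lemma sum_if_restrict: "finite A \<Longrightarrow> (\<Sum>r\<in>A. if r \<in> T then g r else 0) = (\<Sum>r\<in>A \<inter> T. g r)"
  by (simp add: sum.inter_restrict)

lemma sum_split_T: fixes g :: "'i::finite \<Rightarrow> real"
  shows "(\<Sum>q\<in>UNIV. g q) = (\<Sum>q\<in>T. g q) + (\<Sum>q\<in>-T. g q)"
  using sum.subset_diff[of T UNIV g] by (simp add: Compl_eq_Diff_UNIV add.commute)

lemma mmul_assoc: "finite T \<Longrightarrow> mmul_on T (mmul_on T A B) C = mmul_on T A (mmul_on T B C)"
proof (intro ext)
  fix a b
  have "(\<Sum>c\<in>T. (\<Sum>e\<in>T. A a e * B e c) * C c b) = (\<Sum>c\<in>T. \<Sum>e\<in>T. A a e * B e c * C c b)"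
    by (simp add: sum_distrib_right)
  also have "\<dots> = (\<Sum>e\<in>T. \<Sum>c\<in>T. A a e * B e c * C c b)" by (rule sum.swap)
  also have "\<dots> = (\<Sum>e\<in>T. A a e * (\<Sum>c\<in>T. B e c * C c b))" by (simp add: sum_distrib_left mult.assoc)
  finally show "mmul_on T (mmul_on T A B) C a b = mmul_on T A (mmul_on T B C) a b"
    by (simp add: mmul_on_def)
qed

lemma mmul_lid: assumes "\<forall>c\<in>T. E a c = (if a = c then 1 else 0)" "a \<in> T" "finite T"
  shows "mmul_on T E Z a b = Z a b"
proof -
  have "(\<Sum>c\<in>T. E a c * Z c b) = (\<Sum>c\<in>T. if a = c then Z c b else 0)"
    by (rule sum.cong) (use assms in auto)
  then show ?thesis using assms by (simp add: mmul_on_def)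
qed

lemma mmul_rid: assumes "\<forall>c\<in>T. E c b = (if c = b then 1 else 0)" "b \<in> T" "finite T"
  shows "mmul_on T Z E a b = Z a b"
proof -
  have "(\<Sum>c\<in>T. Z a c * E c b) = (\<Sum>c\<in>T. if b = c then Z a c else 0)"
    by (rule sum.cong) (use assms in auto)
  then show ?thesis using assms by (simp add: mmul_on_def)
qed

lemma mmul_cong_left: "(\<forall>e\<in>T. M c e = M' c e) \<Longrightarrow> mmul_on T M Z c b = mmul_on T M' Z c b"
  by (simp add: mmul_on_def)

lemma mmul_cong_right: "(\<forall>c\<in>T. Z c b = Z' c b) \<Longrightarrow> mmul_on T X Z a b = mmul_on T X Z' a b"
  by (simp add: mmul_on_def)

text \<open>Existence of a two-sided inverse on T from injectivity.\<close>
lemma inv_exists: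
  fixes L :: "'i::finite \<Rightarrow> 'i \<Rightarrow> real"
  assumes inj: "\<And>f. (\<forall>p\<in>T. (\<Sum>q\<in>T. L p q * f q) = 0) \<Longrightarrow> (\<forall>p\<in>T. f p = 0)"
  shows "\<exists>X. (\<forall>p\<in>T. \<forall>q\<in>T. (\<Sum>r\<in>T. L p r * X r q) = (if p = q then 1 else 0)) \<and>
             (\<forall>p\<in>T. \<forall>q\<in>T. (\<Sum>r\<in>T. X p r * L r q) = (if p = q then 1 else 0)) \<and>
             (\<forall>p q. p \<notin> T \<or> q \<notin> T \<longrightarrow> X p q = 0)"
proof -
  define M :: "real^'i^'i" where "M = (\<chi> p q. if p \<in> T \<and> q \<in> T then L p q else if p = q then 1 else 0)"
  have rowT: "(M ** N) $ p $ q = (\<Sum>r\<in>T. L p r * N $ r $ q)" if "p \<in> T" for N p q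
  proof -
    have "(M ** N) $ p $ q = (\<Sum>r\<in>UNIV. if r \<in> T then L p r * N $ r $ q else 0)"
      unfolding matrix_matrix_mult_def using that by (simp add: M_def) (rule sum.cong, auto)
    also have "\<dots> = (\<Sum>r\<in>T. L p r * N $ r $ q)" by (simp add: sum_if_restrict)
    finally show ?thesis .
  qed
  have colT: "(N ** M) $ p $ q = (\<Sum>r\<in>T. N $ p $ r * L r q)" if "q \<in> T" for N p q
  proof -
    have "(N ** M) $ p $ q = (\<Sum>r\<in>UNIV. if r \<in> T then N $ p $ r * L r q else 0)"
      unfolding matrix_matrix_mult_def using that by (simp add: M_def) (rule sum.cong, auto)
    also have "\<dots> = (\<Sum>r\<in>T. N $ p $ r * L r q)" by (simp add: sum_if_restrict)
    finally show ?thesis .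
  qed
  have ker: "v = 0" if v: "M *v v = 0" for v
  proof -
    have out: "v $ p = 0" if "p \<notin> T" for p
    proof -
      have e: "\<And>r. (if p = r then 1 else 0) * v $ r = (if p = r then v $ r else 0)" by simp
      have "(M *v v) $ p = v $ p"
        unfolding matrix_vector_mult_def using that by (simp add: M_def e)
      then show ?thesis using v by simp
    qed
    have "(\<Sum>q\<in>T. L p q * v $ q) = 0" if "p \<in> T" for p
    proof -
      have "(M *v v) $ p = (\<Sum>r\<in>UNIV. if r \<in> T then L p r * v $ r else 0)"
        unfolding matrix_vector_mult_def using that by (simp add: M_def) (rule sum.cong, auto)
      also have "\<dots> = (\<Sum>r\<in>T. L p r * v $ r)" by (simp add: sum_if_restrict)
      finally show ?thesis using v by simp
    qed
    then have "\<forall>p\<in>T. v $ p = 0" using inj[of "\<lambda>q. v $ q"] by blast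
    with out show "v = 0" by (metis vec_eq_iff zero_index)
  qed
  then have "\<exists>B. B ** M = mat 1" using matrix_left_invertible_ker by blast
  then obtain N where N1: "N ** M = mat 1" by blast
  then have N2: "M ** N = mat 1" using matrix_left_right_inverse by blast
  define X where "X = (\<lambda>p q. if p \<in> T \<and> q \<in> T then N $ p $ q else 0)"
  have "\<forall>p\<in>T. \<forall>q\<in>T. (\<Sum>r\<in>T. L p r * X r q) = (if p = q then 1 else 0)"
  proof (intro ballI)
    fix p q assume p: "p \<in> T" and q: "q \<in> T"
    have "(\<Sum>r\<in>T. L p r * X r q) = (M ** N) $ p $ q" using p q by (simp add: rowT X_def)
    then show "(\<Sum>r\<in>T. L p r * X r q) = (if p = q then 1 else 0)" using N2 by (simp add: mat_def)
  qed
  moreover have "\<forall>p\<in>T. \<forall>q\<in>T. (\<Sum>r\<in>T. X p r * L r q) = (if p = q then 1 else 0)"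
  proof (intro ballI)
    fix p q assume p: "p \<in> T" and q: "q \<in> T"
    have "(\<Sum>r\<in>T. X p r * L r q) = (N ** M) $ p $ q" using p q by (simp add: colT X_def)
    then show "(\<Sum>r\<in>T. X p r * L r q) = (if p = q then 1 else 0)" using N1 by (simp add: mat_def)
  qed
  moreover have "\<forall>p q. p \<notin> T \<or> q \<notin> T \<longrightarrow> X p q = 0" by (auto simp: X_def)
  ultimately show ?thesis by blast
qed

lemma pinv_eq:
  fixes L X :: "'i::finite \<Rightarrow> 'i \<Rightarrow> real"
  assumes R: "\<forall>p\<in>T. \<forall>q\<in>T. (\<Sum>r\<in>T. L p r * X r q) = (if p = q then 1 else 0)"
    and Lf: "\<forall>p\<in>T. \<forall>q\<in>T. (\<Sum>r\<in>T. X p r * L r q) = (if p = q then 1 else 0)"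
    and Z: "\<forall>p q. p \<notin> T \<or> q \<notin> T \<longrightarrow> X p q = 0"
  shows "pinv_on T L = X"
proof -
  have fin: "finite T" by simp
  have LX: "\<forall>p\<in>T. \<forall>q\<in>T. mmul_on T L X p q = (if p = q then 1 else 0)" using R by (simp add: mmul_on_def)
  have XL: "\<forall>p\<in>T. \<forall>q\<in>T. mmul_on T X L p q = (if p = q then 1 else 0)" using Lf by (simp add: mmul_on_def)
  let ?P = "\<lambda>X. (\<forall>a b. (a \<notin> T \<or> b \<notin> T) \<longrightarrow> X a b = 0) \<and>
      (\<forall>a\<in>T. \<forall>b\<in>T.
         mmul_on T (mmul_on T L X) L a b = L a b \<and>
         mmul_on T (mmul_on T X L) X a b = X a b \<and>
         mmul_on T L X a b = mmul_on T L X b a \<and>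
         mmul_on T X L a b = mmul_on T X L b a)"
  have PX: "?P X"
  proof (intro conjI allI impI ballI)
    fix a b assume "a \<notin> T \<or> b \<notin> T" then show "X a b = 0" using Z by blast
  next
    fix a b assume a: "a \<in> T" and b: "b \<in> T"
    show "mmul_on T (mmul_on T L X) L a b = L a b" using LX a by (intro mmul_lid) auto
    show "mmul_on T (mmul_on T X L) X a b = X a b" using XL a by (intro mmul_lid) auto
    show "mmul_on T L X a b = mmul_on T L X b a" using LX a b by auto
    show "mmul_on T X L a b = mmul_on T X L b a" using XL a b by auto
  qed
  have uniq: "Y = X" if PY: "?P Y" for Y
  proof (intro ext)
    fix a b
    show "Y a b = X a b"
    proof (cases "a \<in> T \<and> b \<in> T")
      case False then show ?thesis using PY Z by auto
    next
      case True
      then have a: "a \<in> T" and b: "b \<in> T" by auto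
      have "X a b = mmul_on T X (mmul_on T L X) a b"
        by (rule mmul_rid[symmetric]) (use LX b in auto)
      also have "\<dots> = mmul_on T X (mmul_on T (mmul_on T (mmul_on T L Y) L) X) a b"
        using PY by (intro mmul_cong_right ballI mmul_cong_left) auto
      also have "mmul_on T X (mmul_on T (mmul_on T (mmul_on T L Y) L) X) = 
                 mmul_on T (mmul_on T (mmul_on T X L) Y) (mmul_on T L X)"
        by (simp add: mmul_assoc)
      also have "\<dots> a b = mmul_on T (mmul_on T X L) Y a b"
        by (rule mmul_rid) (use LX b in auto)
      also have "\<dots> = Y a b"
        by (rule mmul_lid) (use XL a in auto)
      finally show ?thesis by simp
    qed
  qed
  show ?thesis unfolding pinv_on_def
    by (rule the_equality[of ?P X, OF PX uniq])
qed



lemma schur_reduce: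
  fixes L X :: "'i::finite \<Rightarrow> 'i \<Rightarrow> real"
  assumes Lf: "\<forall>p\<in>T. \<forall>q\<in>T. (\<Sum>r\<in>T. X p r * L r q) = (if p = q then 1 else 0)"
    and h: "\<forall>p\<in>T. (\<Sum>q\<in>UNIV. L p q * f q) = 0"
  shows "(\<Sum>q\<in>UNIV. L p q * f q) = (\<Sum>q\<in>-T. (L p q - (\<Sum>c\<in>T. \<Sum>e\<in>T. L p c * X c e * L e q)) * f q)"
proof -
  define g where "g e = (\<Sum>q\<in>-T. L e q * f q)" for e
  have fc: "f c = - (\<Sum>e\<in>T. X c e * g e)" if c: "c \<in> T" for c
  proof -
    have ge: "(\<Sum>q\<in>T. L e q * f q) = - g e" if "e \<in> T" for e
      using h that sum_split_T[of "\<lambda>q. L e q * f q" T] by (simp add: g_def)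
    have "(\<Sum>e\<in>T. X c e * (\<Sum>q\<in>T. L e q * f q)) = (\<Sum>e\<in>T. \<Sum>q\<in>T. X c e * L e q * f q)"
      by (simp add: sum_distrib_left mult.assoc)
    also have "\<dots> = (\<Sum>q\<in>T. \<Sum>e\<in>T. X c e * L e q * f q)" by (rule sum.swap)
    also have "\<dots> = (\<Sum>q\<in>T. (\<Sum>e\<in>T. X c e * L e q) * f q)" by (simp add: sum_distrib_right)
    also have "\<dots> = (\<Sum>q\<in>T. if c = q then f q else 0)"
      by (rule sum.cong) (use Lf c in auto)
    also have "\<dots> = f c" using c by simp
    finally have "f c = (\<Sum>e\<in>T. X c e * (\<Sum>q\<in>T. L e q * f q))" ..
    also have "\<dots> = (\<Sum>e\<in>T. X c e * (- g e))" by (rule sum.cong) (simp_all add: ge)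
    finally show ?thesis by (simp add: sum_negf)
  qed
  have e1: "(\<Sum>c\<in>T. L p c * f c) = - (\<Sum>c\<in>T. \<Sum>e\<in>T. \<Sum>q\<in>-T. L p c * X c e * L e q * f q)"
  proof -
    have "(\<Sum>c\<in>T. L p c * f c) = (\<Sum>c\<in>T. - (L p c * (\<Sum>e\<in>T. X c e * g e)))"
      by (rule sum.cong) (simp_all add: fc)
    also have "\<dots> = - (\<Sum>c\<in>T. \<Sum>e\<in>T. \<Sum>q\<in>-T. L p c * X c e * L e q * f q)"
      by (simp add: sum_negf g_def sum_distrib_left mult.assoc)
    finally show ?thesis .
  qed
  have e2: "(\<Sum>q\<in>-T. (\<Sum>c\<in>T. \<Sum>e\<in>T. L p c * X c e * L e q) * f q)
      = (\<Sum>c\<in>T. \<Sum>e\<in>T. \<Sum>q\<in>-T. L p c * X c e * L e q * f q)"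
  proof -
    have "(\<Sum>q\<in>-T. (\<Sum>c\<in>T. \<Sum>e\<in>T. L p c * X c e * L e q) * f q)
        = (\<Sum>q\<in>-T. \<Sum>c\<in>T. \<Sum>e\<in>T. L p c * X c e * L e q * f q)"
      by (simp add: sum_distrib_right)
    also have "\<dots> = (\<Sum>c\<in>T. \<Sum>q\<in>-T. \<Sum>e\<in>T. L p c * X c e * L e q * f q)" by (rule sum.swap)
    also have "\<dots> = (\<Sum>c\<in>T. \<Sum>e\<in>T. \<Sum>q\<in>-T. L p c * X c e * L e q * f q)"
      by (rule sum.cong[OF refl]) (rule sum.swap)
    finally show ?thesis .
  qed
  have "(\<Sum>q\<in>UNIV. L p q * f q) = (\<Sum>q\<in>T. L p q * f q) + (\<Sum>q\<in>-T. L p q * f q)"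
    by (rule sum_split_T)
  also have "\<dots> = (\<Sum>q\<in>-T. L p q * f q) - (\<Sum>q\<in>-T. (\<Sum>c\<in>T. \<Sum>e\<in>T. L p c * X c e * L e q) * f q)"
    using e1 e2 by simp
  also have "\<dots> = (\<Sum>q\<in>-T. (L p q - (\<Sum>c\<in>T. \<Sum>e\<in>T. L p c * X c e * L e q)) * f q)"
    by (simp add: sum_subtractf left_diff_distrib)
  finally show ?thesis .
qed

lemma sum_pair: "(\<Sum>q\<in>UNIV. g q) = (\<Sum>y\<in>UNIV. \<Sum>b\<in>UNIV. g (y, b))"
  by (subst sum.cartesian_product) (simp add: split_def)

context cg
begin

abbreviation "LL \<equiv> conn_laplacian w \<sigma>"

lemma LL_eq: "LL (x, a) (y, b) = (if (y, b) = (x, a) then deg w x else 0) - w x y * (\<sigma> x y $ a $ b)"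
  by (auto simp: conn_laplacian_def w_diag)

lemma L_apply: "(\<Sum>q\<in>UNIV. LL (x, a) q * f q) =
    deg w x * f (x, a) - (\<Sum>y\<in>UNIV. w x y * (\<Sum>b\<in>UNIV. \<sigma> x y $ a $ b * f (y, b)))"
proof -
  have "(\<Sum>q\<in>UNIV. LL (x, a) q * f q) =
     (\<Sum>q\<in>UNIV. (if q = (x, a) then deg w x * f q else 0)) - (\<Sum>q\<in>UNIV. w x (fst q) * (\<sigma> x (fst q) $ a $ snd q) * f q)"
    unfolding sum_subtractf[symmetric]
  proof (rule sum.cong[OF refl])
    fix q :: "'v \<times> 'd"
    obtain y b where q: "q = (y, b)" by (cases q)
    show "LL (x, a) q * f q = (if q = (x, a) then deg w x * f q else 0) - w x (fst q) * (\<sigma> x (fst q) $ a $ snd q) * f q"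
      unfolding q LL_eq by (cases "(y, b) = (x, a)") (auto simp: left_diff_distrib)
  qed
  also have "(\<Sum>q\<in>UNIV. w x (fst q) * (\<sigma> x (fst q) $ a $ snd q) * f q)
      = (\<Sum>y\<in>UNIV. w x y * (\<Sum>b\<in>UNIV. \<sigma> x y $ a $ b * f (y, b)))"
    by (simp add: sum_pair sum_distrib_left mult.assoc)
  finally show ?thesis by simp
qed

lemma max_principle:
  fixes F :: "'v \<Rightarrow> real^'d"
  assumes z0: "z0 \<notin> U" and out: "\<And>x. x \<notin> U \<Longrightarrow> F x = 0"
    and harm: "\<And>x. x \<in> U \<Longrightarrow> deg w x *\<^sub>R F x = (\<Sum>y\<in>UNIV. w x y *\<^sub>R (\<sigma> x y *v F y))"
  shows "F x = 0"
proof -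
  define M where "M = Max (range (\<lambda>x. norm (F x)))"
  have le: "norm (F y) \<le> M" for y unfolding M_def by (rule Max_ge) auto
  have "M \<in> range (\<lambda>x. norm (F x))" unfolding M_def by (rule Max_in) auto
  then obtain x0 where x0: "norm (F x0) = M" by auto
  have key: "norm (F y) = M" if x: "x \<in> U" and nx: "norm (F x) = M" and wy: "w x y > 0" for x y
  proof -
    have "deg w x * M = norm (deg w x *\<^sub>R F x)" using nx deg_pos[of x] by simp
    also have "\<dots> = norm (\<Sum>y\<in>UNIV. w x y *\<^sub>R (\<sigma> x y *v F y))" using harm[OF x] by simp
    also have "\<dots> \<le> (\<Sum>y\<in>UNIV. norm (w x y *\<^sub>R (\<sigma> x y *v F y)))" by (rule norm_sum)
    also have "\<dots> = (\<Sum>y\<in>UNIV. w x y * norm (F y))"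
    proof (rule sum.cong[OF refl])
      fix y
      show "norm (w x y *\<^sub>R (\<sigma> x y *v F y)) = w x y * norm (F y)"
      proof (cases "w x y > 0")
        case True then show ?thesis using orth_norm[OF orth[OF True]] by simp
      next
        case False then have "w x y = 0" using w_nonneg[of x y] by simp
        then show ?thesis by simp
      qed
    qed
    finally have A: "deg w x * M \<le> (\<Sum>y\<in>UNIV. w x y * norm (F y))" .
    have "(\<Sum>y\<in>UNIV. w x y * (M - norm (F y))) = deg w x * M - (\<Sum>y\<in>UNIV. w x y * norm (F y))"
      by (simp add: deg_def right_diff_distrib sum_subtractf sum_distrib_right)
    then have s0: "(\<Sum>y\<in>UNIV. w x y * (M - norm (F y))) \<le> 0" using A by simp
    have nn: "\<forall>y\<in>UNIV. 0 \<le> w x y * (M - norm (F y))" using w_nonneg le by simp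
    then have "(\<Sum>y\<in>UNIV. w x y * (M - norm (F y))) = 0" using s0 sum_nonneg[of UNIV] by (meson antisym)
    then have "\<forall>y\<in>UNIV. w x y * (M - norm (F y)) = 0" using nn by (simp add: sum_nonneg_eq_0_iff)
    then have "w x y * (M - norm (F y)) = 0" by simp
    then show ?thesis using wy by simp
  qed
  have path: "norm (F z) = M" if "(\<lambda>u v. w u v > 0)\<^sup>*\<^sup>* x0 z" for z
    using that
  proof (induction rule: rtranclp_induct)
    case base then show ?case by (rule x0)
  next
    case (step y z)
    show ?case
    proof (cases "y \<in> U")
      case True then show ?thesis using key step by blast
    next
      case False
      then have "M = 0" using step out by simp
      then show ?thesis using le[of z] by simp
    qed
  qed
  have "M = 0" using path[OF conn[of x0 z0]] out[OF z0] by simp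
  then show ?thesis using le[of x] by simp
qed

lemma inj_func:
  assumes z0: "z0 \<notin> U" and out: "\<And>p. fst p \<notin> U \<Longrightarrow> f p = 0"
    and harm: "\<And>p. fst p \<in> U \<Longrightarrow> (\<Sum>q\<in>UNIV. LL p q * f q) = 0"
  shows "f p = 0"
proof -
  define F where "F x = (\<chi> a. f (x, a))" for x
  have "F x = 0" for x
  proof (rule max_principle[OF z0])
    fix x assume "x \<notin> U" then show "F x = 0" using out by (simp add: F_def vec_eq_iff)
  next
    fix x assume x: "x \<in> U"
    show "deg w x *\<^sub>R F x = (\<Sum>y\<in>UNIV. w x y *\<^sub>R (\<sigma> x y *v F y))"
    proof (subst vec_eq_iff, intro allI)
      fix a
      have "(\<Sum>q\<in>UNIV. LL (x, a) q * f q) = 0" using harm[of "(x, a)"] x by simp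
      then show "(deg w x *\<^sub>R F x) $ a = (\<Sum>y\<in>UNIV. w x y *\<^sub>R (\<sigma> x y *v F y)) $ a"
        unfolding L_apply by (simp add: F_def matrix_vector_mult_def)
    qed
  qed
  then show ?thesis by (metis F_def vec_lambda_beta zero_index prod.collapse)
qed

end


lemma matrix_inv_left: fixes A :: "'a::field^'n^'n" assumes "invertible A" shows "matrix_inv A ** A = mat 1"
proof -
  have "\<exists>A'. A ** A' = mat 1 \<and> A' ** A = mat 1" using assms by (simp add: invertible_def)
  then have "A ** matrix_inv A = mat 1 \<and> matrix_inv A ** A = mat 1"
    unfolding matrix_inv_def by (rule someI_ex)
  then show ?thesis by simp
qed

context cg
begin

abbreviation "SS \<equiv> {p::'v \<times> 'd. fst p \<notin> {i, j}}"

lemma X_exists: "\<exists>X. (\<forall>p\<in>SS. \<forall>q\<in>SS. (\<Sum>r\<in>SS. LL p r * X r q) = (if p = q then 1 else 0)) \<and>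
             (\<forall>p\<in>SS. \<forall>q\<in>SS. (\<Sum>r\<in>SS. X p r * LL r q) = (if p = q then 1 else 0)) \<and>
             (\<forall>p q. p \<notin> SS \<or> q \<notin> SS \<longrightarrow> X p q = 0)"
proof (rule inv_exists)
  fix f :: "'v \<times> 'd \<Rightarrow> real"
  assume h: "\<forall>p\<in>SS. (\<Sum>q\<in>SS. LL p q * f q) = 0"
  define f' where "f' q = (if q \<in> SS then f q else 0)" for q
  have "f' p = 0" for p
  proof (rule inj_func[of i "-{i, j}"])
    show "i \<notin> - {i, j}" by simp
  next
    fix p :: "'v \<times> 'd" assume "fst p \<notin> - {i, j}" then show "f' p = 0" by (auto simp: f'_def)
  next
    fix p :: "'v \<times> 'd" assume p: "fst p \<in> - {i, j}"
    have "(\<Sum>q\<in>UNIV. LL p q * f' q) = (\<Sum>q\<in>UNIV. if q \<in> SS then LL p q * f q else 0)"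
      by (rule sum.cong) (auto simp: f'_def)
    also have "\<dots> = (\<Sum>q\<in>SS. LL p q * f q)" by (subst sum_if_restrict) auto
    also have "\<dots> = 0"
    proof -
      have "p \<in> SS" using p by simp
      then show ?thesis using h by blast
    qed
    finally show "(\<Sum>q\<in>UNIV. LL p q * f' q) = 0" .
  qed
  then show "\<forall>p\<in>SS. f p = 0" by (metis f'_def)
qed

lemma sum_compS: "(\<Sum>q\<in>-SS. g q) = (\<Sum>c\<in>UNIV. g (i, c)) + (\<Sum>c\<in>UNIV. g (j, c))"
proof -
  have e: "-SS = range (Pair i) \<union> range (Pair j)" by auto
  have d: "range (Pair i) \<inter> range (Pair j) = {}" using ij by auto
  show ?thesis unfolding e
    by (subst sum.union_disjoint) (use d in \<open>auto simp: sum.reindex inj_on_def\<close>)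
qed

lemma main:
  "invertible (cond_block w \<sigma> i j i i) \<and>
   Omega0 w \<sigma> i j = - (matrix_inv (cond_block w \<sigma> i j i i) ** cond_block w \<sigma> i j i j)"
proof -
  obtain X where R: "\<forall>p\<in>SS. \<forall>q\<in>SS. (\<Sum>r\<in>SS. LL p r * X r q) = (if p = q then 1 else 0)"
    and Lf: "\<forall>p\<in>SS. \<forall>q\<in>SS. (\<Sum>r\<in>SS. X p r * LL r q) = (if p = q then 1 else 0)"
    and Z: "\<forall>p q. p \<notin> SS \<or> q \<notin> SS \<longrightarrow> X p q = 0"
    using X_exists by blast
  have PX: "pinv_on SS LL = X" by (rule pinv_eq[OF R Lf Z])
  define Ci where "Ci = cond_block w \<sigma> i j i i"
  define Cj where "Cj = cond_block w \<sigma> i j i j"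
  have Cc: "cond_block w \<sigma> i j x y $ a $ b = LL (x, a) (y, b) - (\<Sum>c\<in>SS. \<Sum>e\<in>SS. LL (x, a) c * X c e * LL e (y, b))"
    for x y a b
    unfolding cond_block_def conductance_def schur_on_def PX by simp
  have claim1: "(\<Sum>q\<in>UNIV. LL (i, a) q * f q) = (\<Sum>c\<in>UNIV. Ci $ a $ c * f (i, c)) + (\<Sum>c\<in>UNIV. Cj $ a $ c * f (j, c))"
    if hS: "\<forall>p\<in>SS. (\<Sum>q\<in>UNIV. LL p q * f q) = 0" for f a
    unfolding schur_reduce[OF Lf hS] sum_compS
    by (simp add: Ci_def Cj_def Cc)
  \<comment> \<open>harmonic equation for Omega\<close>
  define fb where "fb b q = Om (fst q) (snd q) b" for b q
  have harm: "(\<Sum>q\<in>UNIV. LL p q * fb b q) = 0" if p: "fst p \<noteq> j" for p b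
  proof -
    obtain x a where pp: "p = (x, a)" by (cases p)
    have x: "x \<noteq> j" using p pp by simp
    have "deg w x * Om x a b = (\<Sum>y\<in>UNIV. deg w x * (w x y / deg w x * (\<Sum>c\<in>UNIV. \<sigma> x y $ a $ c * Om y c b)))"
      by (subst Om_harm[OF x]) (simp add: sum_distrib_left)
    also have "\<dots> = (\<Sum>y\<in>UNIV. w x y * (\<Sum>c\<in>UNIV. \<sigma> x y $ a $ c * Om y c b))"
      by (rule sum.cong) (use deg_pos[of x] in auto)
    finally show ?thesis unfolding pp L_apply by (simp add: fb_def)
  qed
  have CO: "Ci ** Omega0 w \<sigma> i j = - Cj"
  proof (subst vec_eq_iff, intro allI, subst vec_eq_iff, intro allI)
    fix a b
    have "0 = (\<Sum>q\<in>UNIV. LL (i, a) q * fb b q)" using harm[of "(i, a)" b] ij by simp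
    also have "\<dots> = (\<Sum>c\<in>UNIV. Ci $ a $ c * Om i c b) + (\<Sum>c\<in>UNIV. Cj $ a $ c * Om j c b)"
      by (subst claim1) (use harm in \<open>auto simp: fb_def\<close>)
    also have "(\<Sum>c\<in>UNIV. Cj $ a $ c * Om j c b) = Cj $ a $ b"
      by (simp add: Om_j if_distrib cong: if_cong)
    finally show "(Ci ** Omega0 w \<sigma> i j) $ a $ b = (- Cj) $ a $ b"
      by (simp add: matrix_matrix_mult_def Om_def)
  qed
  have ker: "v = 0" if v: "Ci *v v = 0" for v
  proof -
    define f0 where "f0 q = (if fst q = i then v $ snd q else 0)" for q
    define g where "g e = (\<Sum>q\<in>-SS. LL e q * f0 q)" for e
    define f where "f q = (if q \<in> SS then - (\<Sum>e\<in>SS. X q e * g e) else f0 q)" for q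
    have hS: "\<forall>p\<in>SS. (\<Sum>q\<in>UNIV. LL p q * f q) = 0"
    proof
      fix p assume p: "p \<in> SS"
      have "(\<Sum>q\<in>SS. LL p q * f q) = - (\<Sum>q\<in>SS. \<Sum>e\<in>SS. LL p q * X q e * g e)"
        by (simp add: f_def sum_negf sum_distrib_left mult.assoc)
      also have "(\<Sum>q\<in>SS. \<Sum>e\<in>SS. LL p q * X q e * g e) = (\<Sum>e\<in>SS. \<Sum>q\<in>SS. LL p q * X q e * g e)"
        by (rule sum.swap)
      also have "\<dots> = (\<Sum>e\<in>SS. (\<Sum>q\<in>SS. LL p q * X q e) * g e)"
        by (simp add: sum_distrib_right)
      also have "\<dots> = (\<Sum>e\<in>SS. if p = e then g e else 0)"
      proof (rule sum.cong[OF refl])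
        fix e assume e: "e \<in> SS"
        show "(\<Sum>q\<in>SS. LL p q * X q e) * g e = (if p = e then g e else 0)"
          using bspec[OF bspec[OF R p] e] by simp
      qed
      also have "\<dots> = g p" using p by simp
      finally have a1: "(\<Sum>q\<in>SS. LL p q * f q) = - g p" .
      have a2: "(\<Sum>q\<in>-SS. LL p q * f q) = g p" unfolding g_def
        by (rule sum.cong) (auto simp: f_def)
      show "(\<Sum>q\<in>UNIV. LL p q * f q) = 0"
        using sum_split_T[of "\<lambda>q. LL p q * f q" SS] a1 a2 by simp
    qed
    have fi: "f (i, c) = v $ c" for c by (simp add: f_def f0_def)
    have fj: "f (j, c) = 0" for c using ij by (simp add: f_def f0_def)
    have hi: "(\<Sum>q\<in>UNIV. LL (i, a) q * f q) = 0" for a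
    proof -
      have "(\<Sum>q\<in>UNIV. LL (i, a) q * f q) = (\<Sum>c\<in>UNIV. Ci $ a $ c * v $ c)"
        using claim1[OF hS, of a] by (simp add: fi fj)
      also have "\<dots> = (Ci *v v) $ a" by (simp add: matrix_vector_mult_def)
      finally show ?thesis using v by simp
    qed
    have "f p = 0" for p
    proof (rule inj_func[of j "-{j}"])
      show "j \<notin> -{j}" by simp
    next
      fix p :: "'v \<times> 'd" assume "fst p \<notin> -{j}"
      then show "f p = 0" using ij by (simp add: f_def f0_def)
    next
      fix p :: "'v \<times> 'd" assume p: "fst p \<in> -{j}"
      show "(\<Sum>q\<in>UNIV. LL p q * f q) = 0"
      proof (cases "p \<in> SS")
        case True then show ?thesis using hS by blast
      next
        case False
        then obtain a where "p = (i, a)" using p by (cases p) auto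
        then show ?thesis using hi by simp
      qed
    qed
    then show "v = 0" using fi by (metis vec_eq_iff zero_index)
  qed
  have invC: "invertible Ci"
    unfolding invertible_left_inverse using matrix_left_invertible_ker ker by blast
  have "Omega0 w \<sigma> i j = (matrix_inv Ci ** Ci) ** Omega0 w \<sigma> i j"
    using matrix_inv_left[OF invC] by simp
  also have "\<dots> = matrix_inv Ci ** (- Cj)" by (simp add: matrix_mul_assoc[symmetric] CO)
  also have "\<dots> = - (matrix_inv Ci ** Cj)"
    by (simp add: vec_eq_iff matrix_matrix_mult_def sum_negf)
  finally show ?thesis using invC by (simp add: Ci_def Cj_def)
qed

end

theorem lemma5p4:
  fixes w :: "'v::finite \<Rightarrow> 'v \<Rightarrow> real" and \<sigma> :: "'v \<Rightarrow> 'v \<Rightarrow> real^'d::finite^'d"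
    and i j :: 'v
  assumes "connection_graph w \<sigma>" and "i \<noteq> j"
  shows "invertible (cond_block w \<sigma> i j i i) \<and>
         Omega0 w \<sigma> i j = - (matrix_inv (cond_block w \<sigma> i j i i) ** cond_block w \<sigma> i j i j)"
proof -
  interpret cg w \<sigma> i j by unfold_locales (use assms in auto)
  show ?thesis by (rule main)
qed


end
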